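(* Let $d\geq 2$ and let $\mathcal{D}\subset\mathbb{R}^d$ be bounded and convex with non-empty interior. If $\alpha=(\alpha_1,\ldots,\alpha_d)\in\mathbb{R}^d$ is such that \[\sup_{T_1,\ldots,T_d\geq1} L(\alpha,\mathcal{D}_{T^{-1}})=\infty,\] then \[\liminf_{n\to\infty} n\,\|n\alpha_1\|_{\mathbb{R}/\mathbb{Z}}\cdots\|n\alpha_d\|_{\mathbb{R}/\mathbb{Z}}=0.\]
   Context: For a set $\mathcal{D}\subset\mathbb{R}^d$ and $q\in\mathcal{D}$, $\tau(q,\mathcal{D})=\min\{n\in\mathbb{N}^*\mid q+n\alpha\in\mathcal{D}+\mathbb{Z}^d\}$ with $\mathbb{N}^*=\{1,2,\ldots\}$, and $L(\alpha,\mathcal{D})$ is the number of distinct values of $\tau(q,\mathcal{D})$ as $q$ ranges over $\mathcal{D}$. For $T=\operatorname{diag}(T_1,\ldots,T_d)$ with $T_i>0$, $\mathcal{D}_{T^{-1}}=\{xT^{-1}\mid x\in\mathcal{D}\}$. $\|x\|_{\mathbb{R}/\mathbb{Z}}$ denotes the distance from $x$ to the nearest integer. *)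

theory Defs
  imports "HOL-Analysis.Analysis" "HOL-Library.Extended_Nat" "HOL-Library.Extended_Real"
begin

definition int_lattice :: "(real^'n) set" where
  "int_lattice = {z. \<forall>i. z $ i \<in> \<int>}"

definition returns :: "real^'n \<Rightarrow> (real^'n) set \<Rightarrow> real^'n \<Rightarrow> nat \<Rightarrow> bool" where
  "returns \<alpha> D q n \<longleftrightarrow> (\<exists>z\<in>int_lattice. q + real n *\<^sub>R \<alpha> - z \<in> D)"

definition tau :: "real^'n \<Rightarrow> (real^'n) set \<Rightarrow> real^'n \<Rightarrow> enat" where
  "tau \<alpha> D q = (if \<exists>n\<ge>1. returns \<alpha> D q n
                 then enat (LEAST n. n \<ge> 1 \<and> returns \<alpha> D q n) else \<infinity>)"

definition num_return_times :: "real^'n \<Rightarrow> (real^'n) set \<Rightarrow> enat" where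
  "num_return_times \<alpha> D = (if finite (tau \<alpha> D ` D) then enat (card (tau \<alpha> D ` D)) else \<infinity>)"

text \<open>D_{T^{-1}} = {x T^{-1} | x in D}, T = diag(T_1,...,T_d).\<close>
definition scale_inv :: "(real^'n) set \<Rightarrow> real^'n \<Rightarrow> (real^'n) set" where
  "scale_inv D T = (\<lambda>x. \<chi> i. x $ i / T $ i) ` D"

definition dist_Z :: "real \<Rightarrow> real" where
  "dist_Z x = \<bar>x - real_of_int (round x)\<bar>"

end

theory Submission
  imports Defs "HOL-Library.FuncSet"
begin

definition lat :: "real^'n \<Rightarrow> real^'n \<Rightarrow> int \<Rightarrow> int^'n \<Rightarrow> real \<times> (real^'n)" where
  "lat \<alpha> T n z = (of_int n / (\<Prod>i\<in>UNIV. T$i), \<chi> i. (of_int n * \<alpha>$i - of_int (z$i)) * T$i)"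

definition Lat :: "real^'n \<Rightarrow> real^'n \<Rightarrow> (real \<times> (real^'n)) set" where
  "Lat \<alpha> T = {lat \<alpha> T n z | n z. True}"

lemma lat_add: "lat \<alpha> T n z + lat \<alpha> T m w = lat \<alpha> T (n+m) (z+w)"
  unfolding lat_def by (simp add: vec_eq_iff add_divide_distrib algebra_simps)

lemma lat_diff: "lat \<alpha> T n z - lat \<alpha> T m w = lat \<alpha> T (n-m) (z-w)"
  unfolding lat_def by (simp add: vec_eq_iff diff_divide_distrib algebra_simps)

lemma lat_scale: "of_int c *\<^sub>R lat \<alpha> T n z = lat \<alpha> T (c*n) (\<chi> i. c * z$i)"
  unfolding lat_def by (simp add: vec_eq_iff algebra_simps)

lemma Lat_sum:
  assumes "finite F" "F \<subseteq> Lat \<alpha> T"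
  shows "(\<Sum>b\<in>F. of_int (c b) *\<^sub>R b) \<in> Lat \<alpha> T"
  using assms
proof (induction F rule: finite_induct)
  case empty
  have "lat \<alpha> T 0 0 = 0" unfolding lat_def by (simp add: vec_eq_iff zero_prod_def)
  then show ?case unfolding Lat_def by (auto intro!: exI[of _ 0])
next
  case (insert x F)
  then obtain n z where x: "x = lat \<alpha> T n z" unfolding Lat_def by auto
  from insert obtain m w where s: "(\<Sum>b\<in>F. of_int (c b) *\<^sub>R b) = lat \<alpha> T m w" unfolding Lat_def by auto
  have "(\<Sum>b\<in>insert x F. of_int (c b) *\<^sub>R b) = lat \<alpha> T (c x * n + m) ((\<chi> i. c x * z$i) + w)"
    using insert by (simp add: s x lat_scale lat_add)
  then show ?case unfolding Lat_def by auto
qed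

lemma dist_Z_le: "dist_Z x \<le> \<bar>x - of_int k\<bar>"
  unfolding dist_Z_def by (rule round_diff_minimal)

lemma dist_Z_nonneg: "dist_Z x \<ge> 0" unfolding dist_Z_def by simp

lemma separation:
  fixes \<alpha> T :: "real^'n"
  assumes T1: "\<forall>i. T$i \<ge> 1" and c: "c > 0"
    and bad: "\<forall>m::nat. m \<ge> 1 \<longrightarrow> real m * (\<Prod>i\<in>UNIV. dist_Z (real m * \<alpha>$i)) \<ge> c"
    and nz: "n \<noteq> 0 \<or> z \<noteq> 0"
  shows "\<bar>fst (lat \<alpha> T n z)\<bar> \<ge> min 1 c \<or> (\<exists>i. \<bar>snd (lat \<alpha> T n z) $ i\<bar> \<ge> min 1 c)"
proof (rule ccontr)
  define \<delta> where "\<delta> = min 1 c"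
  have d0: "\<delta> > 0" "\<delta> \<le> 1" "\<delta> \<le> c" using c by (auto simp: \<delta>_def)
  define N where "N = (\<Prod>i\<in>UNIV. T$i)"
  have N0: "N > 0" unfolding N_def using T1 by (auto intro!: prod_pos) (metis less_le_trans zero_less_one)
  assume "\<not> ?thesis"
  then have f: "\<bar>of_int n / N\<bar> < \<delta>" and s: "\<And>i. \<bar>(of_int n * \<alpha>$i - of_int (z$i)) * T$i\<bar> < \<delta>"
    by (auto simp: lat_def \<delta>_def N_def not_le)
  show False
  proof (cases "n = 0")
    case True
    then obtain i where "z$i \<noteq> 0" using nz by (auto simp: vec_eq_iff)
    then have "\<bar>of_int (z$i)\<bar> \<ge> (1::real)" by linarith
    moreover have "T$i \<ge> 1" using T1 by auto
    ultimately have "\<bar>of_int (z$i) * T$i\<bar> \<ge> 1"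
      by (simp add: abs_mult) (metis abs_ge_zero mult_mono mult_1_right order_trans zero_le_one)
    with s[of i] True d0 show False by simp
  next
    case False
    define m where "m = nat \<bar>n\<bar>"
    have m1: "m \<ge> 1" using False by (simp add: m_def)
    have mreal: "real m = \<bar>of_int n\<bar>" by (simp add: m_def)
    have key: "dist_Z (real m * \<alpha>$i) * T$i \<le> \<bar>(of_int n * \<alpha>$i - of_int (z$i)) * T$i\<bar>" for i
    proof -
      have "dist_Z (real m * \<alpha>$i) \<le> \<bar>of_int n * \<alpha>$i - of_int (z$i)\<bar>"
      proof (cases "n \<ge> 0")
        case True
        then have "real m = of_int n" by (simp add: m_def)
        then show ?thesis using dist_Z_le[of "real m * \<alpha>$i" "z$i"] by simp
      next
        case False
        then have "real m = - of_int n" by (simp add: m_def)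
        then have "\<bar>real m * \<alpha>$i - of_int (- z$i)\<bar> = \<bar>of_int n * \<alpha>$i - of_int (z$i)\<bar>" by simp
        then show ?thesis using dist_Z_le[of "real m * \<alpha>$i" "- z$i"] by simp
      qed
      then show ?thesis using T1 by (simp add: abs_mult) (metis abs_of_nonneg dual_order.trans mult_right_mono zero_le_one)
    qed
    have P: "(\<Prod>i\<in>UNIV. dist_Z (real m * \<alpha>$i) * T$i) \<le> \<delta> ^ CARD('n)"
    proof -
      have "(\<Prod>i\<in>UNIV. dist_Z (real m * \<alpha>$i) * T$i) \<le> (\<Prod>i\<in>(UNIV::'n set). \<delta>)"
      proof (rule prod_mono)
        fix i :: 'n
        have t: "T$i \<ge> 0" using T1 by (meson order_trans zero_le_one)
        show "0 \<le> dist_Z (real m * \<alpha>$i) * T$i \<and> dist_Z (real m * \<alpha>$i) * T$i \<le> \<delta>"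
          using key[of i] s[of i] t dist_Z_nonneg[of "real m * \<alpha>$i"] by simp
      qed
      then show ?thesis by simp
    qed
    have "c \<le> real m * (\<Prod>i\<in>UNIV. dist_Z (real m * \<alpha>$i))" using bad m1 by auto
    also have "\<dots> = (real m / N) * (\<Prod>i\<in>UNIV. dist_Z (real m * \<alpha>$i) * T$i)"
      using N0 by (simp add: prod.distrib N_def[symmetric])
    also have "\<dots> \<le> (real m / N) * \<delta> ^ CARD('n)"
      using P N0 by (intro mult_left_mono) auto
    also have "\<dots> < \<delta> * \<delta> ^ CARD('n)"
    proof (rule mult_strict_right_mono)
      have "real m / N = \<bar>of_int n / N\<bar>" using N0 mreal by simp
      then show "real m / N < \<delta>" using f by simp
      show "0 < \<delta> ^ CARD('n)" using d0 by simp
    qed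
    also have "\<dots> \<le> \<delta>" using d0 by (simp add: power_le_one mult_le_one)
    finally show False using d0 by simp
  qed
qed

lemma bad_const:
  fixes \<alpha> :: "real^'n"
  defines "f \<equiv> (\<lambda>n::nat. real n * (\<Prod>i\<in>UNIV. dist_Z (real n * \<alpha>$i)))"
  assumes L: "liminf (\<lambda>n. ereal (f n)) \<noteq> 0"
  shows "\<exists>c>0. \<forall>m::nat. m \<ge> 1 \<longrightarrow> f m \<ge> c"
proof -
  have fnn: "f n \<ge> 0" for n unfolding f_def dist_Z_def by (intro mult_nonneg_nonneg prod_nonneg) auto
  have "0 \<le> liminf (\<lambda>n. ereal (f n))" using fnn by (intro Liminf_bounded) auto
  with L have "0 < liminf (\<lambda>n. ereal (f n))" by auto
  then obtain c' where c': "0 < ereal c'" "ereal c' < liminf (\<lambda>n. ereal (f n))"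
    using ereal_dense2 by blast
  have "\<forall>y<liminf (\<lambda>n. ereal (f n)). eventually (\<lambda>n. y < ereal (f n)) sequentially"
    using le_Liminf_iff[of "liminf (\<lambda>n. ereal (f n))" sequentially "\<lambda>n. ereal (f n)"] by (simp only: order_refl simp_thms)
  then have "eventually (\<lambda>n. ereal c' < ereal (f n)) sequentially" using c'(2) by blast
  then have "eventually (\<lambda>n. c' < f n) sequentially" by simp
  then obtain N0 where N0: "\<And>n. n \<ge> N0 \<Longrightarrow> c' < f n" by (auto simp: eventually_sequentially)
  have c'0: "c' > 0" using c' by simp
  have pos: "f m > 0" if "m \<ge> 1" for m
  proof (rule ccontr)
    assume "\<not> f m > 0"
    then have "f m = 0" using fnn[of m] by simp
    then have "(\<Prod>i\<in>UNIV. dist_Z (real m * \<alpha>$i)) = 0" using that by (simp add: f_def)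
    then obtain i where i: "dist_Z (real m * \<alpha>$i) = 0" by (metis UNIV_I finite_class.finite_UNIV prod_zero_iff)
    then have "real m * \<alpha>$i = of_int (round (real m * \<alpha>$i))" by (simp add: dist_Z_def)
    define n where "n = m * Suc N0"
    have "real n * \<alpha>$i = of_int (int (Suc N0) * round (real m * \<alpha>$i))"
    proof -
      have "real n * \<alpha>$i = real (Suc N0) * (real m * \<alpha>$i)" by (simp add: n_def algebra_simps)
      also have "\<dots> = real (Suc N0) * of_int (round (real m * \<alpha>$i))"
        by (subst \<open>real m * \<alpha>$i = _\<close>) (rule refl)
      finally show ?thesis by simp
    qed
    then have "dist_Z (real n * \<alpha>$i) = 0" unfolding dist_Z_def by (simp only: round_of_int)
    then have "f n = 0" by (auto simp: f_def)
    moreover have "n \<ge> N0" using mult_le_mono1[OF that, of "Suc N0"] by (simp add: n_def)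
    ultimately show False using N0 c'0 by fastforce
  qed
  define c where "c = Min (insert c' (f ` {1..N0}))"
  have cpos: "c > 0" unfolding c_def using pos c'0 by (auto simp: Min_gr_iff)
  have "f m \<ge> c" if "m \<ge> 1" for m
  proof (cases "m \<le> N0")
    case True then show ?thesis using that unfolding c_def by (intro Min_le) auto
  next
    case False
    then have "c' < f m" using N0 by auto
    moreover have "c \<le> c'" unfolding c_def by auto
    ultimately show ?thesis by simp
  qed
  with cpos show ?thesis by auto
qed

lemma pigeon:
  assumes "finite X" "finite Y" "g ` X \<subseteq> Y" "Y \<noteq> {}"
  shows "\<exists>y\<in>Y. card X \<le> card Y * card {x\<in>X. g x = y}"
proof (rule ccontr)
  assume "\<not> ?thesis"
  then have lt: "card Y * card {x\<in>X. g x = y} < card X" if "y \<in> Y" for y using that by auto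
  have "card Y * card X = card Y * (\<Sum>y\<in>Y. card {x\<in>X. g x = y})"
    using sum.group[OF assms(1,2,3), of "\<lambda>_. 1::nat"] by simp
  also have "\<dots> = (\<Sum>y\<in>Y. card Y * card {x\<in>X. g x = y})" by (simp add: sum_distrib_left)
  also have "\<dots> < (\<Sum>y\<in>Y. card X)" using assms(2,4) lt by (intro sum_strict_mono) auto
  also have "\<dots> = card Y * card X" by simp
  finally show False by simp
qed

lemma vecbox_card:
  fixes I :: "'n::finite \<Rightarrow> 'a set"
  assumes "\<And>i. finite (I i)"
  shows "finite {v::'a^'n. \<forall>i. v$i \<in> I i} \<and> card {v::'a^'n. \<forall>i. v$i \<in> I i} \<le> (\<Prod>i\<in>UNIV. card (I i))"
proof -
  have sub: "{v::'a^'n. \<forall>i. v$i \<in> I i} \<subseteq> (\<lambda>g. vec_lambda g) ` (PiE UNIV I)"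
  proof
    fix v :: "'a^'n" assume "v \<in> {v. \<forall>i. v$i \<in> I i}"
    then have "(\<lambda>i. v$i) \<in> PiE UNIV I" by auto
    moreover have "v = vec_lambda (\<lambda>i. v$i)" by simp
    ultimately show "v \<in> (\<lambda>g. vec_lambda g) ` (PiE UNIV I)" by blast
  qed
  have fin: "finite (PiE UNIV I)" using assms by (intro finite_PiE) auto
  have "card {v::'a^'n. \<forall>i. v$i \<in> I i} \<le> card ((\<lambda>g. vec_lambda g) ` (PiE UNIV I))"
    using fin sub by (intro card_mono) auto
  also have "\<dots> \<le> card (PiE UNIV I)" by (rule card_image_le[OF fin])
  also have "\<dots> = (\<Prod>i\<in>UNIV. card (I i))" by (simp add: card_PiE)
  finally show ?thesis using fin sub finite_subset by blast
qed

lemma floor_close: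
  fixes x y Q :: real
  assumes "Q > 0" "\<lfloor>x * Q\<rfloor> = \<lfloor>y * Q\<rfloor>"
  shows "\<bar>x - y\<bar> * Q < 1"
proof -
  have "\<bar>x*Q - y*Q\<bar> < 1" using assms(2)
    by (smt (verit) floor_correct of_int_floor_le real_of_int_floor_add_one_gt)
  then show ?thesis using assms(1) by (simp add: abs_mult left_diff_distrib[symmetric])
qed

lemma lower_count:
  fixes \<alpha> T :: "real^'n"
  assumes a1: "a \<ge> 1" and Ta: "\<forall>i. T$i \<ge> a"
  shows "\<exists>G. finite G \<and> inj_on (\<lambda>(n,z). lat \<alpha> T n z) G
     \<and> (\<forall>(n,z)\<in>G. \<bar>fst (lat \<alpha> T n z)\<bar> \<le> a \<and> (\<forall>i. \<bar>snd (lat \<alpha> T n z) $ i\<bar> \<le> a))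
     \<and> real (card G) \<ge> a^(CARD('n)+1) / 2^CARD('n)"
proof -
  define d where "d = CARD('n)"
  define N where "N = (\<Prod>i\<in>UNIV. T$i)"
  have Tpos: "T$i > 0" for i using Ta a1 by (metis less_le_trans zero_less_one)
  have N0: "N > 0" unfolding N_def using Tpos by (auto intro!: prod_pos)
  define M where "M = nat \<lfloor>a * N\<rfloor>"
  have aN0: "a * N > 0" using a1 N0 by simp
  have Mle: "real M \<le> a * N" unfolding M_def using aN0 by simp
  have Mge: "real M + 1 \<ge> a * N" unfolding M_def using aN0 by linarith
  define Q where "Q i = \<lceil>T$i / a\<rceil>" for i
  have Tai: "T$i / a \<ge> 1" for i using Ta a1 by (simp add: le_divide_eq)
  have Q1: "Q i \<ge> 1" for i unfolding Q_def using Tai[of i] by linarith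
  have Qge: "real_of_int (Q i) \<ge> T$i / a" for i unfolding Q_def by simp
  have Qle: "real_of_int (Q i) \<le> (2/a) * T$i" for i
  proof -
    have "real_of_int (Q i) < T$i / a + 1" unfolding Q_def by linarith
    also have "\<dots> \<le> 2 * (T$i / a)" using Tai[of i] by simp
    finally show ?thesis by simp
  qed
  define cell where "cell n = (\<chi> i. \<lfloor>frac (real n * \<alpha>$i) * of_int (Q i)\<rfloor>)" for n :: nat
  define Y where "Y = {v::int^'n. \<forall>i. v$i \<in> {0..Q i - 1}}"
  have Yc: "finite Y \<and> card Y \<le> (\<Prod>i\<in>UNIV. card {0..Q i - 1})"
    unfolding Y_def by (rule vecbox_card) auto
  have cellY0: "0 \<le> \<lfloor>frac (real n * \<alpha>$i) * of_int (Q i)\<rfloor> \<and> \<lfloor>frac (real n * \<alpha>$i) * of_int (Q i)\<rfloor> \<le> Q i - 1" for n i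
  proof -
    have q: "real_of_int (Q i) > 0" using Q1[of i] by simp
    have "frac (real n * \<alpha>$i) * of_int (Q i) < of_int (Q i)"
      using frac_lt_1 q by simp
    then have "\<lfloor>frac (real n * \<alpha>$i) * of_int (Q i)\<rfloor> < Q i" by (simp add: floor_less_iff)
    moreover have "0 \<le> \<lfloor>frac (real n * \<alpha>$i) * of_int (Q i)\<rfloor>" using q by simp
    ultimately show "0 \<le> \<lfloor>frac (real n * \<alpha>$i) * of_int (Q i)\<rfloor> \<and> \<lfloor>frac (real n * \<alpha>$i) * of_int (Q i)\<rfloor> \<le> Q i - 1"
      by simp
  qed
  have cellY: "cell ` {0..M} \<subseteq> Y" using cellY0 by (auto simp: Y_def cell_def)
  have Yne: "Y \<noteq> {}" using cellY by auto
  obtain y where yY: "y \<in> Y" and pg: "card {0..M} \<le> card Y * card {n\<in>{0..M}. cell n = y}"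
    using pigeon[OF _ _ cellY Yne] Yc by auto
  define C where "C = {n\<in>{0..M}. cell n = y}"
  have cardY: "real (card Y) \<le> (2/a)^d * N"
  proof -
    have "real (card Y) \<le> real (\<Prod>i\<in>UNIV. card {0..Q i - 1})" using Yc by linarith
    also have "\<dots> = (\<Prod>i\<in>UNIV. real_of_int (Q i))" using Q1 by (simp add: of_nat_prod) (rule prod.cong[OF refl], rule of_nat_nat, rule order_trans[OF zero_le_one Q1])
    also have "\<dots> \<le> (\<Prod>i\<in>UNIV. (2/a) * T$i)"
      using Q1 Qle by (intro prod_mono) (auto intro: order_trans[OF zero_le_one Q1])
    also have "\<dots> = (2/a)^d * N" by (simp only: prod.distrib prod_constant N_def d_def)
    finally show ?thesis .
  qed
  have cardC: "real (card C) \<ge> a^(d+1) / 2^d"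
  proof -
    have Cp: "card Y > 0" using Yc Yne by (simp add: card_gt_0_iff)
    have "a * N \<le> real (card {0..M})" using Mge by simp
    also have "\<dots> \<le> real (card Y) * real (card C)" using pg unfolding C_def
      by (metis of_nat_le_iff of_nat_mult)
    also have "\<dots> \<le> (2/a)^d * N * real (card C)" using cardY by (intro mult_right_mono) auto
    finally have "a * N \<le> (2/a)^d * N * real (card C)" .
    then have "a \<le> (2/a)^d * real (card C)" using N0 by (simp add: mult.commute mult.left_commute)
    then have "a * a^d \<le> 2^d * real (card C)" using a1 by (simp add: power_divide field_simps)
    then show ?thesis by (simp add: field_simps)
  qed
  have Cne: "C \<noteq> {}"
  proof
    assume "C = {}"
    then have "real (card C) = 0" by simp
    moreover have "a^(d+1) / 2^d > 0" using a1 by simp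
    ultimately show False using cardC by simp
  qed
  then obtain n0 where n0: "n0 \<in> C" by auto
  define h where "h n = (int n - int n0, \<chi> i. \<lfloor>real n * \<alpha>$i\<rfloor> - \<lfloor>real n0 * \<alpha>$i\<rfloor>)" for n
  define G where "G = h ` C"
  have finC: "finite C" unfolding C_def by simp
  have injh: "inj_on h C" unfolding h_def by (auto intro!: inj_onI)
  have cardG: "card G = card C" unfolding G_def using injh by (simp add: card_image)
  have injl: "inj_on (\<lambda>(n,z). lat \<alpha> T n z) G"
  proof (rule inj_onI, clarify)
    fix n z n' z' assume "(n,z) \<in> G" "(n',z') \<in> G" "lat \<alpha> T n z = lat \<alpha> T n' z'"
    then have "of_int n / N = of_int n' / N" unfolding lat_def N_def by simp
    then have "n = n'" using N0 by simp
    with \<open>(n,z) \<in> G\<close> \<open>(n',z') \<in> G\<close> show "n = n' \<and> z = z'" unfolding G_def h_def by auto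
  qed
  have box: "\<bar>fst (lat \<alpha> T n z)\<bar> \<le> a \<and> (\<forall>i. \<bar>snd (lat \<alpha> T n z) $ i\<bar> \<le> a)" if "(n,z) \<in> G" for n z
  proof -
    have nzG: "(n,z) \<in> h ` C" using that by (simp only: G_def)
    obtain m where m1: "(n,z) = h m" and m0: "m \<in> C" using imageE[OF nzG] by blast
    note m = m0 m1
    then have nm: "n = int m - int n0" and zm: "z = (\<chi> i. \<lfloor>real m * \<alpha>$i\<rfloor> - \<lfloor>real n0 * \<alpha>$i\<rfloor>)"
      unfolding h_def by auto
    have mM: "m \<le> M" "n0 \<le> M" using m(1) n0 unfolding C_def by auto
    have "\<bar>real_of_int n\<bar> \<le> real M" using mM nm by linarith
    then have "\<bar>real_of_int n\<bar> / N \<le> a" using Mle N0 by (simp add: divide_le_eq mult.commute)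
    then have f: "\<bar>fst (lat \<alpha> T n z)\<bar> \<le> a" using N0 unfolding lat_def N_def by (simp add: abs_divide)
    have "\<bar>snd (lat \<alpha> T n z) $ i\<bar> \<le> a" for i
    proof -
      have ce: "cell m = cell n0" using m(1) n0 unfolding C_def by auto
      have "cell m $ i = cell n0 $ i" using ce by simp
      then have fl: "\<lfloor>frac (real m * \<alpha>$i) * of_int (Q i)\<rfloor> = \<lfloor>frac (real n0 * \<alpha>$i) * of_int (Q i)\<rfloor>"
        unfolding cell_def by (simp only: vec_lambda_beta)
      have q: "real_of_int (Q i) > 0" using Q1[of i] by simp
      have cl: "\<bar>frac (real m * \<alpha>$i) - frac (real n0 * \<alpha>$i)\<bar> * of_int (Q i) < 1"
        by (rule floor_close[OF q fl])
      have eq: "snd (lat \<alpha> T n z) $ i = (frac (real m * \<alpha>$i) - frac (real n0 * \<alpha>$i)) * T$i"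
        unfolding lat_def nm zm frac_def by (simp add: algebra_simps)
      have "\<bar>frac (real m * \<alpha>$i) - frac (real n0 * \<alpha>$i)\<bar> * T$i \<le> \<bar>frac (real m * \<alpha>$i) - frac (real n0 * \<alpha>$i)\<bar> * (a * of_int (Q i))"
        using Qge[of i] a1 by (intro mult_left_mono) (auto simp: divide_le_eq mult.commute)
      also have "\<dots> \<le> a" using cl a1 by (simp add: mult.commute mult.left_commute)
      finally show ?thesis using eq Tpos[of i] by (simp add: abs_mult)
    qed
    with f show ?thesis by blast
  qed
  have box': "\<forall>(n,z)\<in>G. \<bar>fst (lat \<alpha> T n z)\<bar> \<le> a \<and> (\<forall>i. \<bar>snd (lat \<alpha> T n z) $ i\<bar> \<le> a)"
  proof
    fix p assume p: "p \<in> G"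
    obtain n z where pnz: "p = (n,z)" by (cases p)
    show "case p of (n,z) \<Rightarrow> \<bar>fst (lat \<alpha> T n z)\<bar> \<le> a \<and> (\<forall>i. \<bar>snd (lat \<alpha> T n z) $ i\<bar> \<le> a)"
      unfolding pnz using box[of n z] p pnz by simp
  qed
  have finG: "finite G" unfolding G_def using finC by simp
  have cG: "real (card G) \<ge> a^(CARD('n)+1) / 2^CARD('n)" using cardG cardC unfolding d_def by simp
  show ?thesis using finG injl box' cG by blast
qed

lemma floor_range:
  fixes x A e :: real
  assumes "\<bar>x\<bar> \<le> A" "e > 0"
  shows "\<lfloor>x / e\<rfloor> \<in> {-\<lceil>A/e\<rceil>..\<lceil>A/e\<rceil>}"
proof -
  have "\<bar>x / e\<bar> \<le> A / e" using assms by (simp add: abs_divide divide_right_mono)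
  then have "- (A/e) \<le> x / e" "x / e \<le> A / e" by linarith+
  then show ?thesis by (simp add: le_floor_iff) linarith
qed

lemma floor_eq_close:
  fixes x y e :: real
  assumes "e > 0" "\<lfloor>x / e\<rfloor> = \<lfloor>y / e\<rfloor>"
  shows "\<bar>x - y\<bar> < e"
proof -
  have "\<bar>x - y\<bar> * (1/e) < 1" using floor_close[of "1/e" x y] assms by simp
  then show ?thesis using assms(1) by (simp add: field_simps)
qed

lemma inj_count:
  fixes g :: "'a \<Rightarrow> int^'n"
  assumes "inj_on g S" "g ` S \<subseteq> {v. \<forall>i. v$i \<in> I}" "finite I"
  shows "finite S \<and> card S \<le> card I ^ CARD('n)"
proof -
  have vb: "finite {v::int^'n. \<forall>i. v$i \<in> I} \<and> card {v::int^'n. \<forall>i. v$i \<in> I} \<le> (\<Prod>i\<in>(UNIV::'n set). card I)"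
    using vecbox_card[of "\<lambda>_. I"] assms(3) by simp
  then have fin: "finite (g ` S)" using assms(2) finite_subset by blast
  then have fS: "finite S" using assms(1) finite_image_iff by blast
  have "card S = card (g ` S)" using assms(1) by (simp add: card_image)
  also have "\<dots> \<le> card {v::int^'n. \<forall>i. v$i \<in> I}" using vb assms(2) by (intro card_mono) auto
  also have "\<dots> \<le> card I ^ CARD('n)" using vb by simp
  finally show ?thesis using fS by simp
qed

definition sepd :: "(real \<times> (real^'n)) set \<Rightarrow> real \<Rightarrow> bool" where
  "sepd S \<delta> \<longleftrightarrow> (\<forall>x\<in>S. \<forall>y\<in>S. x \<noteq> y \<longrightarrow> (\<bar>fst x - fst y\<bar> \<ge> \<delta> \<or> (\<exists>i. \<bar>snd x $ i - snd y $ i\<bar> \<ge> \<delta>)))"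

definition boxd :: "(real \<times> (real^'n)) set \<Rightarrow> real \<Rightarrow> real \<Rightarrow> bool" where
  "boxd S A B \<longleftrightarrow> (\<forall>x\<in>S. \<bar>fst x\<bar> \<le> A \<and> (\<forall>i. \<bar>snd x $ i\<bar> \<le> B))"

lemma count_general:
  fixes S :: "(real \<times> (real^'n)) set"
  assumes d: "\<delta> > 0" and s: "sepd S \<delta>" and b: "boxd S A B"
  shows "finite S \<and> card S \<le> nat (2 * \<lceil>A/\<delta>\<rceil> + 1) * nat (2 * \<lceil>B/\<delta>\<rceil> + 1) ^ CARD('n)"
proof -
  define K1 where "K1 = \<lceil>A/\<delta>\<rceil>"
  define K where "K = \<lceil>B/\<delta>\<rceil>"
  define g where "g x = (\<lfloor>fst x / \<delta>\<rfloor>, \<chi> i. \<lfloor>snd x $ i / \<delta>\<rfloor>)" for x :: "real \<times> (real^'n)"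
  have inj: "inj_on g S"
  proof (rule inj_onI)
    fix x y assume xy: "x \<in> S" "y \<in> S" "g x = g y"
    show "x = y"
    proof (rule ccontr)
      assume "x \<noteq> y"
      then have "\<bar>fst x - fst y\<bar> \<ge> \<delta> \<or> (\<exists>i. \<bar>snd x $ i - snd y $ i\<bar> \<ge> \<delta>)"
        using s xy unfolding sepd_def by blast
      moreover have "\<bar>fst x - fst y\<bar> < \<delta>"
        using xy(3) d by (intro floor_eq_close) (auto simp: g_def)
      moreover have "\<bar>snd x $ i - snd y $ i\<bar> < \<delta>" for i
      proof -
        have "(\<chi> i. \<lfloor>snd x $ i / \<delta>\<rfloor>) $ i = (\<chi> i. \<lfloor>snd y $ i / \<delta>\<rfloor>) $ i"
          using xy(3) by (simp add: g_def)
        then show ?thesis using d by (intro floor_eq_close) auto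
      qed
      ultimately show False by (meson not_le)
    qed
  qed
  have img: "g ` S \<subseteq> {-K1..K1} \<times> {v. \<forall>i. v$i \<in> {-K..K}}"
  proof
    fix y assume "y \<in> g ` S"
    then obtain x where x: "x \<in> S" "y = g x" by auto
    have "\<lfloor>fst x / \<delta>\<rfloor> \<in> {-K1..K1}" using b d x unfolding boxd_def K1_def by (intro floor_range) auto
    moreover have "\<lfloor>snd x $ i / \<delta>\<rfloor> \<in> {-K..K}" for i using b d x unfolding boxd_def K_def by (intro floor_range) auto
    ultimately show "y \<in> {-K1..K1} \<times> {v. \<forall>i. v$i \<in> {-K..K}}" using x unfolding g_def by auto
  qed
  have vb: "finite {v::int^'n. \<forall>i. v$i \<in> {-K..K}} \<and> card {v::int^'n. \<forall>i. v$i \<in> {-K..K}} \<le> (\<Prod>i\<in>(UNIV::'n set). card {-K..K})"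
    using vecbox_card[of "\<lambda>_. {-K..K}"] by simp
  have finT: "finite ({-K1..K1} \<times> {v::int^'n. \<forall>i. v$i \<in> {-K..K}})" using vb by simp
  have fS: "finite S" using finite_subset[OF img finT] inj finite_image_iff by blast
  have "card S = card (g ` S)" using inj by (simp add: card_image)
  also have "\<dots> \<le> card ({-K1..K1} \<times> {v::int^'n. \<forall>i. v$i \<in> {-K..K}})" using finT img by (intro card_mono)
  also have "\<dots> = card {-K1..K1} * card {v::int^'n. \<forall>i. v$i \<in> {-K..K}}" by (simp add: card_cartesian_product)
  also have "\<dots> \<le> card {-K1..K1} * card {-K..K} ^ CARD('n)" using vb by (intro mult_left_mono) auto
  also have "\<dots> = nat (2 * K1 + 1) * nat (2 * K + 1) ^ CARD('n)" by simp
  finally show ?thesis using fS unfolding K_def K1_def by simp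
qed

lemma inner_expand: "w \<bullet> u = fst w * fst u + (\<Sum>i\<in>UNIV. snd w $ i * snd u $ i)"
  for w u :: "real \<times> (real^'n)"
  by (simp add: inner_prod_def inner_vec_def)

lemma count_hyper:
  fixes S :: "(real \<times> (real^'n)) set" and w :: "real \<times> (real^'n)"
  assumes d: "\<delta> > 0" and s: "sepd S \<delta>" and b: "boxd S A A"
    and w0: "w \<noteq> 0" and orth: "\<forall>x\<in>S. w \<bullet> x = 0"
  shows "card S \<le> nat (2 * \<lceil>A/(\<delta> / CARD('n))\<rceil> + 1) ^ CARD('n)"
proof -
  define e where "e = \<delta> / CARD('n)"
  have e0: "e > 0" using d by (simp add: e_def)
  have de: "real CARD('n) * e = \<delta>" by (simp add: e_def)
  define K where "K = \<lceil>A/e\<rceil>"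
  have sepu: "\<bar>fst x - fst y\<bar> \<ge> \<delta> \<or> (\<exists>i. \<bar>snd x $ i - snd y $ i\<bar> \<ge> \<delta>)" if "x \<in> S" "y \<in> S" "x \<noteq> y" for x y
    using s that unfolding sepd_def by blast
  have orthu: "fst w * (fst x - fst y) + (\<Sum>i\<in>UNIV. snd w $ i * (snd x $ i - snd y $ i)) = 0" if "x \<in> S" "y \<in> S" for x y
  proof -
    have "w \<bullet> (x - y) = 0" using orth that by (simp add: inner_diff_right)
    then show ?thesis by (simp add: inner_expand)
  qed
  obtain j where j: "\<forall>i. \<bar>snd w $ i\<bar> \<le> \<bar>snd w $ j\<bar>"
  proof -
    have "finite ((\<lambda>i. \<bar>snd w $ i\<bar>) ` UNIV)" "(\<lambda>i. \<bar>snd w $ i\<bar>) ` UNIV \<noteq> {}" by auto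
    from Max_in[OF this] obtain j where "Max ((\<lambda>i. \<bar>snd w $ i\<bar>) ` UNIV) = \<bar>snd w $ j\<bar>" by blast
    then show ?thesis using that by (metis Max_ge UNIV_I finite_imageI finite_class.finite_UNIV imageI)
  qed
  define g where "g x = (if \<bar>snd w $ j\<bar> \<le> \<bar>fst w\<bar> then (\<chi> i. \<lfloor>snd x $ i / e\<rfloor>)
       else (\<chi> i. if i = j then \<lfloor>fst x / e\<rfloor> else \<lfloor>snd x $ i / e\<rfloor>))" for x :: "real \<times> (real^'n)"
  have inj: "inj_on g S"
  proof (rule inj_onI)
    fix x y assume xS: "x \<in> S" and yS: "y \<in> S" and gxy: "g x = g y"
    show "x = y"
    proof (rule ccontr)
      assume xy: "x \<noteq> y"
      define u0 where "u0 = fst x - fst y"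
      define u where "u i = snd x $ i - snd y $ i" for i
      have sp: "\<bar>u0\<bar> \<ge> \<delta> \<or> (\<exists>i. \<bar>u i\<bar> \<ge> \<delta>)" using sepu[OF xS yS xy] unfolding u0_def u_def .
      have ou: "fst w * u0 + (\<Sum>i\<in>UNIV. snd w $ i * u i) = 0" using orthu[OF xS yS] unfolding u0_def u_def .
      show False
      proof (cases "\<bar>snd w $ j\<bar> \<le> \<bar>fst w\<bar>")
        case True
        then have gx: "(\<chi> i. \<lfloor>snd x $ i / e\<rfloor>) = (\<chi> i. \<lfloor>snd y $ i / e\<rfloor>)" using gxy by (simp add: g_def)
        have ui: "\<bar>u i\<bar> < e" for i
        proof -
          have "(\<chi> i. \<lfloor>snd x $ i / e\<rfloor>) $ i = (\<chi> i. \<lfloor>snd y $ i / e\<rfloor>) $ i" using gx by simp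
          then show ?thesis unfolding u_def using e0 by (intro floor_eq_close) auto
        qed
        have wa: "\<bar>snd w $ i\<bar> \<le> \<bar>fst w\<bar>" for i using True j order_trans by blast
        have fw: "fst w \<noteq> 0"
        proof
          assume "fst w = 0"
          then have "snd w = 0" using wa by (simp add: vec_eq_iff)
          with \<open>fst w = 0\<close> w0 show False by (simp add: prod_eq_iff)
        qed
        have eu: "e \<le> \<delta>" using d by (simp add: e_def divide_le_eq)
        have u0d: "\<bar>u0\<bar> \<ge> \<delta>" using sp ui eu by (meson not_le order_less_le_trans)
        have "\<bar>fst w\<bar> * \<bar>u0\<bar> = \<bar>\<Sum>i\<in>UNIV. snd w $ i * u i\<bar>" using ou by (simp add: abs_mult[symmetric] eq_neg_iff_add_eq_0[symmetric])
        also have "\<dots> \<le> (\<Sum>i\<in>UNIV. \<bar>fst w\<bar> * \<bar>u i\<bar>)"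
          by (rule order_trans[OF sum_abs sum_mono]) (simp add: abs_mult mult_right_mono wa)
        also have "\<dots> < (\<Sum>i\<in>(UNIV::'n set). \<bar>fst w\<bar> * e)"
          using fw ui by (intro sum_strict_mono) auto
        also have "\<dots> = \<bar>fst w\<bar> * \<delta>" using de by (simp add: algebra_simps)
        finally have "\<bar>u0\<bar> < \<delta>" using fw by simp
        with u0d show False by simp
      next
        case False
        then have gx: "(\<chi> i. if i = j then \<lfloor>fst x / e\<rfloor> else \<lfloor>snd x $ i / e\<rfloor>) = (\<chi> i. if i = j then \<lfloor>fst y / e\<rfloor> else \<lfloor>snd y $ i / e\<rfloor>)"
          using gxy by (simp add: g_def)
        have u0e: "\<bar>u0\<bar> < e"
        proof -
          have "(\<chi> i. if i = j then \<lfloor>fst x / e\<rfloor> else \<lfloor>snd x $ i / e\<rfloor>) $ j = (\<chi> i. if i = j then \<lfloor>fst y / e\<rfloor> else \<lfloor>snd y $ i / e\<rfloor>) $ j"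
            using gx by simp
          then show ?thesis unfolding u0_def using e0 by (intro floor_eq_close) auto
        qed
        have ui: "\<bar>u i\<bar> < e" if "i \<noteq> j" for i
        proof -
          have "(\<chi> i. if i = j then \<lfloor>fst x / e\<rfloor> else \<lfloor>snd x $ i / e\<rfloor>) $ i = (\<chi> i. if i = j then \<lfloor>fst y / e\<rfloor> else \<lfloor>snd y $ i / e\<rfloor>) $ i"
            using gx by simp
          then show ?thesis unfolding u_def using e0 that by (intro floor_eq_close) auto
        qed
        have wj: "\<bar>snd w $ j\<bar> > 0" using False by simp
        have eu: "e \<le> \<delta>" using d by (simp add: e_def divide_le_eq)
        have ujd: "\<bar>u j\<bar> \<ge> \<delta>" using sp ui eu u0e by (metis not_le order_less_le_trans)
        have split: "(\<Sum>i\<in>UNIV. snd w $ i * u i) = snd w $ j * u j + (\<Sum>i\<in>UNIV-{j}. snd w $ i * u i)"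
          by (simp add: sum.remove)
        have "\<bar>snd w $ j\<bar> * \<bar>u j\<bar> = \<bar>fst w * u0 + (\<Sum>i\<in>UNIV-{j}. snd w $ i * u i)\<bar>"
          using ou split by (simp add: abs_mult[symmetric])
        also have "\<dots> \<le> \<bar>fst w\<bar> * \<bar>u0\<bar> + (\<Sum>i\<in>UNIV-{j}. \<bar>snd w $ j\<bar> * \<bar>u i\<bar>)"
        proof -
          have "\<bar>\<Sum>i\<in>UNIV-{j}. snd w $ i * u i\<bar> \<le> (\<Sum>i\<in>UNIV-{j}. \<bar>snd w $ j\<bar> * \<bar>u i\<bar>)"
            by (rule order_trans[OF sum_abs sum_mono]) (simp add: abs_mult mult_right_mono j)
          then show ?thesis using abs_triangle_ineq[of "fst w * u0" "\<Sum>i\<in>UNIV-{j}. snd w $ i * u i"] by (simp add: abs_mult)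
        qed
        also have "\<dots> \<le> \<bar>snd w $ j\<bar> * \<bar>u0\<bar> + (\<Sum>i\<in>UNIV-{j}. \<bar>snd w $ j\<bar> * e)"
        proof -
          have "\<bar>fst w\<bar> * \<bar>u0\<bar> \<le> \<bar>snd w $ j\<bar> * \<bar>u0\<bar>" using False by (intro mult_right_mono) auto
          moreover have "(\<Sum>i\<in>UNIV-{j}. \<bar>snd w $ j\<bar> * \<bar>u i\<bar>) \<le> (\<Sum>i\<in>UNIV-{j}. \<bar>snd w $ j\<bar> * e)"
            using ui by (intro sum_mono mult_left_mono) (auto intro: less_imp_le)
          ultimately show ?thesis by simp
        qed
        also have "\<dots> < \<bar>snd w $ j\<bar> * e + (\<Sum>i\<in>UNIV-{j}. \<bar>snd w $ j\<bar> * e)"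
          using u0e wj by simp
        also have "\<dots> = \<bar>snd w $ j\<bar> * (real CARD('n) * e)"
        proof -
          have "card (UNIV - {j}) = CARD('n) - 1" by (simp add: card_Diff_singleton)
          moreover have "CARD('n) \<ge> 1" by (simp add: Suc_leI)
          ultimately show ?thesis by (simp add: algebra_simps of_nat_diff)
        qed
        also have "\<dots> = \<bar>snd w $ j\<bar> * \<delta>" using de by simp
        finally have "\<bar>u j\<bar> < \<delta>" using wj by simp
        with ujd show False by simp
      qed
    qed
  qed
  have img: "g ` S \<subseteq> {v. \<forall>i. v$i \<in> {-K..K}}"
  proof
    fix y assume "y \<in> g ` S"
    then obtain x where x: "x \<in> S" "y = g x" by auto
    have "\<lfloor>fst x / e\<rfloor> \<in> {-K..K}" using b e0 x unfolding boxd_def K_def by (intro floor_range) auto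
    moreover have "\<lfloor>snd x $ i / e\<rfloor> \<in> {-K..K}" for i using b e0 x unfolding boxd_def K_def by (intro floor_range) auto
    ultimately show "y \<in> {v. \<forall>i. v$i \<in> {-K..K}}" using x unfolding g_def by auto
  qed
  have "card S \<le> card {-K..K} ^ CARD('n)" using inj_count[OF inj img] by simp
  then show ?thesis unfolding K_def e_def by simp
qed

lemma sep_Lat:
  fixes \<alpha> T :: "real^'n"
  assumes T1: "\<forall>i. T$i \<ge> 1" and c: "c > 0"
    and bad: "\<forall>m::nat. m \<ge> 1 \<longrightarrow> real m * (\<Prod>i\<in>UNIV. dist_Z (real m * \<alpha>$i)) \<ge> c"
    and S: "S \<subseteq> Lat \<alpha> T"
  shows "sepd S (min 1 c)"
  unfolding sepd_def
proof (intro ballI impI)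
  fix x y assume x: "x \<in> S" and y: "y \<in> S" and xy: "x \<noteq> y"
  obtain n z where xn: "x = lat \<alpha> T n z" using x S unfolding Lat_def by auto
  obtain n' z' where yn: "y = lat \<alpha> T n' z'" using y S unfolding Lat_def by auto
  have d: "x - y = lat \<alpha> T (n - n') (z - z')" using xn yn lat_diff by simp
  have "n - n' \<noteq> 0 \<or> z - z' \<noteq> 0" using xy xn yn by auto
  from separation[OF T1 c bad this] d
  show "min 1 c \<le> \<bar>fst x - fst y\<bar> \<or> (\<exists>i. min 1 c \<le> \<bar>snd x $ i - snd y $ i\<bar>)"
    by (metis fst_diff snd_diff vector_minus_component)
qed

definition Sbox :: "real^'n \<Rightarrow> real^'n \<Rightarrow> real \<Rightarrow> (real \<times> (real^'n)) set" where
  "Sbox \<alpha> T a = {x \<in> Lat \<alpha> T. \<bar>fst x\<bar> \<le> a \<and> (\<forall>i. \<bar>snd x $ i\<bar> \<le> a)}"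

lemma big_a:
  fixes a \<delta> :: real and d :: nat
  assumes "d \<ge> 1" "\<delta> > 0" "\<delta> \<le> 1" "a = (10 * d / \<delta>)^d + 1"
  shows "real (nat (2 * \<lceil>a / (\<delta> / d)\<rceil> + 1) ^ d) < a^(d+1) / 2^d" "a \<ge> 1"
proof -
  have "a \<ge> 1" using assms by simp
  have x1: "a * d / \<delta> \<ge> 1"
  proof -
    have "a \<ge> 1" using assms by simp
    moreover have "d / \<delta> \<ge> 1" using assms by (simp add: le_divide_eq)
    ultimately have "a * (d / \<delta>) \<ge> 1 * 1" by (intro mult_mono) auto
    then show ?thesis by simp
  qed
  have eq: "a / (\<delta> / d) = a * d / \<delta>" by simp
  have "real_of_int (2 * \<lceil>a / (\<delta> / d)\<rceil> + 1) \<le> 2 * (a * d / \<delta>) + 3"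
    unfolding eq by linarith
  also have "\<dots> \<le> 5 * (a * d / \<delta>)" using x1 by simp
  finally have b0: "real_of_int (2 * \<lceil>a / (\<delta> / d)\<rceil> + 1) \<le> 5 * (a * d / \<delta>)" .
  have cpos: "\<lceil>a / (\<delta> / d)\<rceil> \<ge> 0" proof -
    have "a / (\<delta> / d) \<ge> 0" using x1 eq by simp
    then show ?thesis by simp
  qed
  have b1: "real (nat (2 * \<lceil>a / (\<delta> / d)\<rceil> + 1)) \<le> 5 * (a * d / \<delta>)"
    using b0 cpos by (simp add: of_nat_nat)
  have "real (nat (2 * \<lceil>a / (\<delta> / d)\<rceil> + 1) ^ d) \<le> (5 * (a * d / \<delta>))^d"
    using b1 by (simp add: power_mono)
  also have "\<dots> = (a * (5 * d / \<delta>))^d" by (rule arg_cong[of _ _ "\<lambda>t. t^d"]) simp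
  also have "\<dots> = a^d * (5 * d / \<delta>)^d" by (rule power_mult_distrib)
  also have "\<dots> < a^d * a / 2^d"
  proof -
    have "(10 * d / \<delta>)^d = 2^d * (5 * d / \<delta>)^d" by (simp add: power_mult_distrib[symmetric])
    then have "2^d * (5 * d / \<delta>)^d < a" using assms by simp
    then have "(5 * d / \<delta>)^d < a / 2^d" by (simp add: field_simps)
    moreover have "a^d > 0" using \<open>a \<ge> 1\<close> by simp
    ultimately have "a^d * (5 * d / \<delta>)^d < a^d * (a / 2^d)" by (rule mult_strict_left_mono)
    then show ?thesis by simp
  qed
  also have "\<dots> = a^(d+1) / 2^d" by (simp add: mult.commute)
  finally show "real (nat (2 * \<lceil>a / (\<delta> / d)\<rceil> + 1) ^ d) < a^(d+1) / 2^d" .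
  show "a \<ge> 1" using assms by simp
qed

lemma Sbox_props:
  fixes \<alpha> T :: "real^'n"
  assumes T1: "\<forall>i. T$i \<ge> 1" and c: "c > 0"
    and bad: "\<forall>m::nat. m \<ge> 1 \<longrightarrow> real m * (\<Prod>i\<in>UNIV. dist_Z (real m * \<alpha>$i)) \<ge> c"
  shows "sepd (Sbox \<alpha> T a) (min 1 c)" "boxd (Sbox \<alpha> T a) a a"
    "finite (Sbox \<alpha> T a)"
    "card (Sbox \<alpha> T a) \<le> nat (2 * \<lceil>a/min 1 c\<rceil> + 1) * nat (2 * \<lceil>a/min 1 c\<rceil> + 1) ^ CARD('n)"
proof -
  show s: "sepd (Sbox \<alpha> T a) (min 1 c)" by (rule sep_Lat[OF T1 c bad]) (auto simp: Sbox_def)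
  show b: "boxd (Sbox \<alpha> T a) a a" by (auto simp: Sbox_def boxd_def)
  have "min 1 c > 0" using c by simp
  from count_general[OF this s b]
  show "finite (Sbox \<alpha> T a)"
    "card (Sbox \<alpha> T a) \<le> nat (2 * \<lceil>a/min 1 c\<rceil> + 1) * nat (2 * \<lceil>a/min 1 c\<rceil> + 1) ^ CARD('n)" by auto
qed

lemma spanning:
  fixes \<alpha> T :: "real^'n"
  assumes c: "c > 0"
    and bad: "\<forall>m::nat. m \<ge> 1 \<longrightarrow> real m * (\<Prod>i\<in>UNIV. dist_Z (real m * \<alpha>$i)) \<ge> c"
    and a_def: "a = (10 * CARD('n) / min 1 c)^CARD('n) + 1"
    and Ta: "\<forall>i. T$i \<ge> a"
  shows "span (Sbox \<alpha> T a) = UNIV"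
proof (rule ccontr)
  assume ns: "span (Sbox \<alpha> T a) \<noteq> UNIV"
  define \<delta> where "\<delta> = min 1 c"
  define d where "d = CARD('n)"
  have d1: "d \<ge> 1" by (simp add: d_def Suc_leI)
  have dd: "\<delta> > 0" "\<delta> \<le> 1" using c by (auto simp: \<delta>_def)
  note ba = big_a[OF d1 dd, of a, folded \<delta>_def d_def, OF a_def[folded \<delta>_def d_def]]
  have T1: "\<forall>i. T$i \<ge> 1" using Ta ba(2) order_trans by blast
  note P = Sbox_props[OF T1 c bad, of a, folded \<delta>_def]
  obtain w where w: "w \<noteq> 0" "\<forall>x\<in>span (Sbox \<alpha> T a). w \<bullet> x = 0"
    using span_not_UNIV_orthogonal[OF ns] by blast
  have orth: "\<forall>x\<in>Sbox \<alpha> T a. w \<bullet> x = 0" using w(2) span_base by blast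
  have up: "card (Sbox \<alpha> T a) \<le> nat (2 * \<lceil>a/(\<delta> / CARD('n))\<rceil> + 1) ^ CARD('n)"
    by (rule count_hyper[OF dd(1) P(1) P(2) w(1) orth])
  obtain G where G: "finite G" "inj_on (\<lambda>(n,z). lat \<alpha> T n z) G"
     "\<forall>(n,z)\<in>G. \<bar>fst (lat \<alpha> T n z)\<bar> \<le> a \<and> (\<forall>i. \<bar>snd (lat \<alpha> T n z) $ i\<bar> \<le> a)"
     "real (card G) \<ge> a^(CARD('n)+1) / 2^CARD('n)"
    using lower_count[OF ba(2) Ta] by blast
  have sub: "(\<lambda>(n,z). lat \<alpha> T n z) ` G \<subseteq> Sbox \<alpha> T a"
    using G(3) by (auto simp: Sbox_def Lat_def)
  have "card G = card ((\<lambda>(n,z). lat \<alpha> T n z) ` G)" using G(2) by (simp add: card_image)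
  also have "\<dots> \<le> card (Sbox \<alpha> T a)" using sub P(3) by (intro card_mono)
  finally have "real (card G) \<le> real (nat (2 * \<lceil>a/(\<delta> / CARD('n))\<rceil> + 1) ^ CARD('n))"
    using up by linarith
  with G(4) ba(1) show False unfolding d_def by linarith
qed

lemma frac_sum_bound:
  fixes f g :: "'b \<Rightarrow> real"
  assumes "finite S" "\<And>v. v \<in> S \<Longrightarrow> \<bar>f v\<bar> \<le> a" "\<And>v. \<bar>g v\<bar> \<le> 1"
  shows "\<bar>\<Sum>v\<in>S. g v * f v\<bar> \<le> real (card S) * a"
proof -
  have "\<bar>\<Sum>v\<in>S. g v * f v\<bar> \<le> (\<Sum>v\<in>S. \<bar>g v * f v\<bar>)" by (rule sum_abs)
  also have "\<dots> \<le> (\<Sum>v\<in>S. a)"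
  proof (rule sum_mono)
    fix v assume "v \<in> S"
    have "\<bar>g v * f v\<bar> = \<bar>g v\<bar> * \<bar>f v\<bar>" by (simp add: abs_mult)
    also have "\<dots> \<le> 1 * a" using assms(2)[OF \<open>v \<in> S\<close>] assms(3)[of v] by (intro mult_mono) auto
    finally show "\<bar>g v * f v\<bar> \<le> a" by simp
  qed
  also have "\<dots> = real (card S) * a" by simp
  finally show ?thesis .
qed

lemma covering:
  fixes \<alpha> T :: "real^'n"
  assumes c: "c > 0"
    and bad: "\<forall>m::nat. m \<ge> 1 \<longrightarrow> real m * (\<Prod>i\<in>UNIV. dist_Z (real m * \<alpha>$i)) \<ge> c"
    and a_def: "a = (10 * CARD('n) / min 1 c)^CARD('n) + 1"
    and Ta: "\<forall>i. T$i \<ge> a"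
  shows "\<exists>n z. \<bar>fst (lat \<alpha> T n z) - y0\<bar> \<le> real (nat (2 * \<lceil>a/min 1 c\<rceil> + 1) * nat (2 * \<lceil>a/min 1 c\<rceil> + 1) ^ CARD('n)) * a
      \<and> (\<forall>i. \<bar>snd (lat \<alpha> T n z) $ i - yv $ i\<bar> \<le> real (nat (2 * \<lceil>a/min 1 c\<rceil> + 1) * nat (2 * \<lceil>a/min 1 c\<rceil> + 1) ^ CARD('n)) * a)"
proof -
  define Cb where "Cb = nat (2 * \<lceil>a/min 1 c\<rceil> + 1) * nat (2 * \<lceil>a/min 1 c\<rceil> + 1) ^ CARD('n)"
  define S where "S = Sbox \<alpha> T a"
  have d1: "CARD('n) \<ge> 1" by (simp add: Suc_leI)
  have dd: "min 1 c > 0" "min 1 c \<le> 1" using c by auto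
  note ba = big_a[OF d1 dd a_def]
  have T1: "\<forall>i. T$i \<ge> 1" using Ta ba(2) order_trans by blast
  note P = Sbox_props[OF T1 c bad, of a, folded S_def]
  have sp: "span S = UNIV" unfolding S_def by (rule spanning[OF c bad a_def Ta])
  have "(y0, yv) \<in> span S" using sp by simp
  then obtain u where u: "(y0, yv) = (\<Sum>v\<in>S. u v *\<^sub>R v)" using span_finite[OF P(3)] by auto
  have "(\<Sum>v\<in>S. of_int \<lfloor>u v\<rfloor> *\<^sub>R v) \<in> Lat \<alpha> T"
    using P(3) by (intro Lat_sum) (auto simp: S_def Sbox_def)
  then obtain n z where nz: "(\<Sum>v\<in>S. of_int \<lfloor>u v\<rfloor> *\<^sub>R v) = lat \<alpha> T n z" unfolding Lat_def by auto
  define g where "g v = of_int \<lfloor>u v\<rfloor> - u v" for v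
  have g1: "\<bar>g v\<bar> \<le> 1" for v unfolding g_def by linarith
  have diff: "lat \<alpha> T n z - (y0, yv) = (\<Sum>v\<in>S. g v *\<^sub>R v)"
    unfolding nz[symmetric] u g_def by (simp add: scaleR_diff_left sum_subtractf)
  have bx: "\<bar>fst v\<bar> \<le> a" "\<bar>snd v $ i\<bar> \<le> a" if "v \<in> S" for v i
    using P(2) that unfolding boxd_def by auto
  have cS: "real (card S) * a \<le> real Cb * a"
  proof (rule mult_right_mono)
    show "real (card S) \<le> real Cb" unfolding Cb_def using P(4) by (simp only: of_nat_le_iff)
  qed (use ba(2) in auto)
  have "\<bar>fst (lat \<alpha> T n z) - y0\<bar> = \<bar>\<Sum>v\<in>S. g v * fst v\<bar>"
    using arg_cong[OF diff, of fst] by (simp add: fst_sum)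
  also have "\<dots> \<le> real (card S) * a" using P(3) bx(1) g1 by (intro frac_sum_bound) auto
  finally have f: "\<bar>fst (lat \<alpha> T n z) - y0\<bar> \<le> real Cb * a" using cS by simp
  have "\<bar>snd (lat \<alpha> T n z) $ i - yv $ i\<bar> \<le> real Cb * a" for i
  proof -
    have "\<bar>snd (lat \<alpha> T n z) $ i - yv $ i\<bar> = \<bar>\<Sum>v\<in>S. g v * snd v $ i\<bar>"
      using arg_cong[OF diff, of "\<lambda>x. snd x $ i"] by (simp add: snd_sum)
    also have "\<dots> \<le> real (card S) * a" using P(3) bx(2) g1 by (intro frac_sum_bound) auto
    finally show ?thesis using cS by simp
  qed
  with f show ?thesis unfolding Cb_def by blast
qed

lemma covering2:
  fixes \<alpha> T :: "real^'n"
  assumes c: "c > 0"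
    and bad: "\<forall>m::nat. m \<ge> 1 \<longrightarrow> real m * (\<Prod>i\<in>UNIV. dist_Z (real m * \<alpha>$i)) \<ge> c"
    and a_def: "a = (10 * CARD('n) / min 1 c)^CARD('n) + 1"
    and E_def: "E = real (nat (2 * \<lceil>a/min 1 c\<rceil> + 1) * nat (2 * \<lceil>a/min 1 c\<rceil> + 1) ^ CARD('n)) * a"
    and s1: "s \<ge> 1" and T1: "\<forall>i. T$i \<ge> 1"
  shows "\<exists>n z. \<bar>of_int n / (\<Prod>i\<in>UNIV. T$i) - y0\<bar> \<le> E * (a * s)^CARD('n)
      \<and> (\<forall>i. \<bar>(of_int n * \<alpha>$i - of_int (z$i)) * T$i - yv$i\<bar> \<le> E / (a * s))"
proof -
  define d where "d = CARD('n)"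
  have d1: "CARD('n) \<ge> 1" by (simp add: Suc_leI)
  have dd: "min 1 c > 0" "min 1 c \<le> 1" using c by auto
  note ba = big_a[OF d1 dd a_def]
  define l where "l = a * s"
  have as: "a * 1 \<le> a * s" using ba(2) s1 by (intro mult_left_mono) auto
  have l1: "l \<ge> 1" unfolding l_def using as ba(2) by linarith
  have l0: "l > 0" using l1 by simp
  define T2 where "T2 = l *\<^sub>R T"
  have T2a: "\<forall>i. T2$i \<ge> a"
  proof
    fix i
    have "(a * s) * 1 \<le> (a * s) * T$i" using l1 T1 unfolding l_def by (intro mult_left_mono) auto
    then have "a * 1 \<le> a * s * T$i" using as by simp
    then show "T2$i \<ge> a" unfolding T2_def l_def by (simp add: mult.assoc)
  qed
  define N where "N = (\<Prod>i\<in>UNIV. T$i)"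
  have N0: "N > 0" unfolding N_def using T1 by (auto intro!: prod_pos) (metis less_le_trans zero_less_one)
  have N2: "(\<Prod>i\<in>UNIV. T2$i) = l^d * N" unfolding T2_def N_def d_def by (simp add: prod.distrib)
  obtain n z where nz: "\<bar>fst (lat \<alpha> T2 n z) - y0 / l^d\<bar> \<le> E"
    "\<forall>i. \<bar>snd (lat \<alpha> T2 n z) $ i - (l *\<^sub>R yv) $ i\<bar> \<le> E"
    using covering[OF c bad a_def T2a, of "y0 / l^d" "l *\<^sub>R yv"] unfolding E_def by blast
  have ld: "l^d > 0" using l0 by simp
  have "fst (lat \<alpha> T2 n z) - y0 / l^d = (of_int n / N - y0) / l^d"
  proof -
    have "fst (lat \<alpha> T2 n z) = of_int n / (l^d * N)" unfolding lat_def N2 by simp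
    also have "\<dots> = of_int n / N / l^d" by (simp add: mult.commute)
    finally show ?thesis by (simp add: diff_divide_distrib)
  qed
  then have "\<bar>of_int n / N - y0\<bar> / l^d \<le> E" using nz(1) ld by (simp add: abs_divide)
  then have f: "\<bar>of_int n / N - y0\<bar> \<le> E * l^d" using ld by (simp add: divide_le_eq)
  have "\<bar>(of_int n * \<alpha>$i - of_int (z$i)) * T$i - yv$i\<bar> \<le> E / l" for i
  proof -
    have "snd (lat \<alpha> T2 n z) $ i - (l *\<^sub>R yv) $ i = l * ((of_int n * \<alpha>$i - of_int (z$i)) * T$i - yv$i)"
      unfolding lat_def T2_def by (simp add: algebra_simps)
    then have "\<bar>l * ((of_int n * \<alpha>$i - of_int (z$i)) * T$i - yv$i)\<bar> \<le> E" using nz(2) by metis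
    then have "l * \<bar>(of_int n * \<alpha>$i - of_int (z$i)) * T$i - yv$i\<bar> \<le> E" using l0 by (simp add: abs_mult)
    then show ?thesis using l0 by (simp add: le_divide_eq mult.commute)
  qed
  with f show ?thesis unfolding l_def N_def d_def by blast
qed

lemma scale_inv_mem:
  fixes T :: "real^'n"
  assumes T0: "\<forall>i. T$i > 0"
  shows "u \<in> scale_inv D T \<longleftrightarrow> (\<chi> i. u$i * T$i) \<in> D"
proof
  assume "u \<in> scale_inv D T"
  then obtain x where x: "x \<in> D" "u = (\<chi> i. x$i / T$i)" unfolding scale_inv_def by auto
  have "(\<chi> i. u$i * T$i) = x" using T0 x(2) by (simp add: vec_eq_iff) (metis less_irrefl)
  with x(1) show "(\<chi> i. u$i * T$i) \<in> D" by simp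
next
  assume "(\<chi> i. u$i * T$i) \<in> D"
  moreover have "u = (\<chi> i. (\<chi> i. u$i * T$i)$i / T$i)" using T0 by (simp add: vec_eq_iff) (metis less_irrefl)
  ultimately show "u \<in> scale_inv D T" unfolding scale_inv_def by blast
qed

lemma claim1:
  fixes \<alpha> T x0 :: "real^'n"
  assumes T1: "\<forall>i. T$i \<ge> 1"
    and boxD: "\<forall>x. (\<forall>i. \<bar>x$i - x0$i\<bar> \<le> r') \<longrightarrow> x \<in> D"
    and Bb: "\<forall>x\<in>D. \<forall>i. \<bar>x$i\<bar> \<le> B"
    and cov: "\<forall>y0 yv. \<exists>n z. \<bar>of_int n / (\<Prod>i\<in>UNIV. T$i) - y0\<bar> \<le> C
                 \<and> (\<forall>i. \<bar>(of_int n * \<alpha>$i - of_int (z$i)) * T$i - yv$i\<bar> \<le> r')"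
    and C0: "C \<ge> 0"
    and q: "q \<in> scale_inv D T"
  shows "\<exists>m. tau \<alpha> (scale_inv D T) q = enat m \<and> 1 \<le> m \<and> real m \<le> (2*C+1) * (\<Prod>i\<in>UNIV. T$i)
     \<and> (\<exists>zz::int^'n. \<forall>i. \<bar>(real m * \<alpha>$i - of_int (zz$i)) * T$i\<bar> \<le> 2*B)"
proof -
  define N where "N = (\<Prod>i\<in>UNIV. T$i)"
  have T0: "\<forall>i. T$i > 0" using T1 by (metis less_le_trans zero_less_one)
  have N0: "N > 0" unfolding N_def using T0 by (auto intro!: prod_pos)
  define D' where "D' = scale_inv D T"
  obtain x where x: "x \<in> D" "q = (\<chi> i. x$i / T$i)" using q unfolding scale_inv_def by auto
  obtain n z where nz: "\<bar>of_int n / N - (C + 1)\<bar> \<le> C"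
      "\<forall>i. \<bar>(of_int n * \<alpha>$i - of_int (z$i)) * T$i - (x0 - x)$i\<bar> \<le> r'"
    using cov unfolding N_def by blast
  have nN: "of_int n / N \<ge> 1" "of_int n / N \<le> 2*C + 1" using nz(1) by linarith+
  have npos: "of_int n \<ge> N" using nN(1) N0 by (simp add: le_divide_eq)
  have n1: "n \<ge> 1"
  proof -
    have "N \<ge> 1" unfolding N_def using T1 by (simp add: prod_ge_1)
    then show ?thesis using npos by linarith
  qed
  define x' where "x' = (\<chi> i. x$i + (of_int n * \<alpha>$i - of_int (z$i)) * T$i)"
  have x'D: "x' \<in> D" using boxD nz(2) unfolding x'_def by (auto simp: algebra_simps)
  define zr where "zr = (\<chi> i. (of_int (z$i) :: real))"
  have zr: "zr \<in> int_lattice" unfolding zr_def int_lattice_def by auto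
  have "(\<chi> i. (q + real (nat n) *\<^sub>R \<alpha> - zr)$i * T$i) = x'"
    using T0 n1 unfolding x'_def x(2) zr_def by (simp add: vec_eq_iff algebra_simps) (metis less_irrefl)
  then have "q + real (nat n) *\<^sub>R \<alpha> - zr \<in> D'" unfolding D'_def using scale_inv_mem[OF T0] x'D by simp
  then have ret: "returns \<alpha> D' q (nat n)" unfolding returns_def using zr by blast
  have ex: "\<exists>k\<ge>1. returns \<alpha> D' q k" using ret n1 by (intro exI[of _ "nat n"]) auto
  define m where "m = (LEAST k. k \<ge> 1 \<and> returns \<alpha> D' q k)"
  have tau: "tau \<alpha> D' q = enat m" unfolding tau_def m_def using ex by simp
  have Pn: "1 \<le> nat n \<and> returns \<alpha> D' q (nat n)" using ret n1 by simp
  have mP: "m \<ge> 1 \<and> returns \<alpha> D' q m" unfolding m_def by (rule LeastI[of "\<lambda>k. k \<ge> 1 \<and> returns \<alpha> D' q k", OF Pn])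
  have mle: "m \<le> nat n" unfolding m_def by (rule Least_le[of "\<lambda>k. k \<ge> 1 \<and> returns \<alpha> D' q k", OF Pn])
  have mb: "real m \<le> (2*C+1) * N"
  proof -
    have "real m \<le> of_int n" using mle n1 by linarith
    also have "\<dots> \<le> (2*C+1) * N" using nN(2) N0 by (simp add: divide_le_eq)
    finally show ?thesis .
  qed
  obtain zr' where zr': "zr' \<in> int_lattice" "q + real m *\<^sub>R \<alpha> - zr' \<in> D'" using mP unfolding returns_def by blast
  define x'' where "x'' = (\<chi> i. (q + real m *\<^sub>R \<alpha> - zr')$i * T$i)"
  have x''D: "x'' \<in> D" using zr'(2) scale_inv_mem[OF T0] unfolding D'_def x''_def by simp
  define zz where "zz = (\<chi> i. \<lfloor>zr'$i\<rfloor>)"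
  have zzr: "of_int (zz$i) = zr'$i" for i
    using zr'(1) unfolding int_lattice_def zz_def by (auto elim!: Ints_cases)
  have "\<bar>(real m * \<alpha>$i - of_int (zz$i)) * T$i\<bar> \<le> 2*B" for i
  proof -
    have "(real m * \<alpha>$i - of_int (zz$i)) * T$i = x''$i - x$i"
      using T0 unfolding x''_def x(2) zzr by (simp add: algebra_simps) (metis less_irrefl)
    moreover have "\<bar>x''$i\<bar> \<le> B" "\<bar>x$i\<bar> \<le> B" using Bb x''D x(1) by auto
    ultimately show ?thesis by simp
  qed
  then show ?thesis using tau mP mb unfolding D'_def N_def by blast
qed

lemma count_values:
  fixes \<alpha> T :: "real^'n" and D' :: "(real^'n) set"
  assumes T1: "\<forall>i. T$i \<ge> 1" and c: "c > 0"
    and bad: "\<forall>m::nat. m \<ge> 1 \<longrightarrow> real m * (\<Prod>i\<in>UNIV. dist_Z (real m * \<alpha>$i)) \<ge> c"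
    and hyp: "\<forall>q\<in>D'. \<exists>m. tau \<alpha> D' q = enat m \<and> 1 \<le> m \<and> real m \<le> H * (\<Prod>i\<in>UNIV. T$i)
         \<and> (\<exists>zz::int^'n. \<forall>i. \<bar>(real m * \<alpha>$i - of_int (zz$i)) * T$i\<bar> \<le> B2)"
  shows "num_return_times \<alpha> D' \<le> enat (nat (2 * \<lceil>H/min 1 c\<rceil> + 1) * nat (2 * \<lceil>B2/min 1 c\<rceil> + 1) ^ CARD('n))"
proof -
  define N where "N = (\<Prod>i\<in>UNIV. T$i)"
  have T0: "\<forall>i. T$i > 0" using T1 by (metis less_le_trans zero_less_one)
  have N0: "N > 0" unfolding N_def using T0 by (auto intro!: prod_pos)
  define W where "W = {m. \<exists>q\<in>D'. tau \<alpha> D' q = enat m}"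
  have img: "tau \<alpha> D' ` D' = enat ` W"
  proof
    show "tau \<alpha> D' ` D' \<subseteq> enat ` W" using hyp unfolding W_def by fastforce
    show "enat ` W \<subseteq> tau \<alpha> D' ` D'" unfolding W_def by force
  qed
  have Wp: "\<exists>zz::int^'n. real m \<le> H * N \<and> (\<forall>i. \<bar>(real m * \<alpha>$i - of_int (zz$i)) * T$i\<bar> \<le> B2)" if mW: "m \<in> W" for m
  proof -
    obtain q where q: "q \<in> D'" "tau \<alpha> D' q = enat m" using mW unfolding W_def by auto
    obtain m' where "tau \<alpha> D' q = enat m'" "real m' \<le> H * N"
        "\<exists>zz::int^'n. \<forall>i. \<bar>(real m' * \<alpha>$i - of_int (zz$i)) * T$i\<bar> \<le> B2"
      using hyp q(1) unfolding N_def by blast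
    with q(2) show ?thesis by auto
  qed
  define zf where "zf m = (SOME zz::int^'n. real m \<le> H * N \<and> (\<forall>i. \<bar>(real m * \<alpha>$i - of_int (zz$i)) * T$i\<bar> \<le> B2))" for m
  have zf: "real m \<le> H * N \<and> (\<forall>i. \<bar>(real m * \<alpha>$i - of_int (zf m$i)) * T$i\<bar> \<le> B2)" if "m \<in> W" for m
    unfolding zf_def using someI_ex[OF Wp[OF that]] .
  define \<phi> where "\<phi> m = lat \<alpha> T (int m) (zf m)" for m
  define P where "P = \<phi> ` W"
  have PL: "P \<subseteq> Lat \<alpha> T" unfolding P_def \<phi>_def Lat_def by auto
  have sp: "sepd P (min 1 c)" by (rule sep_Lat[OF T1 c bad PL])
  have bp: "boxd P H B2" unfolding boxd_def
  proof
    fix x assume "x \<in> P"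
    then obtain m where m: "m \<in> W" "x = \<phi> m" unfolding P_def by auto
    have "\<bar>real m / N\<bar> \<le> H" using zf[OF m(1)] N0 by (simp add: divide_le_eq)
    moreover have "\<bar>snd x $ i\<bar> \<le> B2" for i using zf[OF m(1)] unfolding m(2) \<phi>_def lat_def by simp
    ultimately show "\<bar>fst x\<bar> \<le> H \<and> (\<forall>i. \<bar>snd x $ i\<bar> \<le> B2)" unfolding m(2) \<phi>_def lat_def N_def by simp
  qed
  have "min 1 c > 0" using c by simp
  note cg = count_general[OF this sp bp]
  have inj: "inj_on \<phi> W"
  proof (rule inj_onI)
    fix m m' assume "m \<in> W" "m' \<in> W" "\<phi> m = \<phi> m'"
    then have "real m / N = real m' / N" unfolding \<phi>_def lat_def N_def by simp
    then show "m = m'" using N0 by simp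
  qed
  have finW: "finite W" using cg inj unfolding P_def using finite_image_iff by blast
  have cW: "card W = card P" unfolding P_def using inj by (simp add: card_image)
  have fin: "finite (tau \<alpha> D' ` D')" using img finW by simp
  have "card (tau \<alpha> D' ` D') = card W" unfolding img by (rule card_image) (simp add: inj_on_def)
  then have "card (tau \<alpha> D' ` D') \<le> nat (2 * \<lceil>H/min 1 c\<rceil> + 1) * nat (2 * \<lceil>B2/min 1 c\<rceil> + 1) ^ CARD('n)"
    using cW cg by simp
  then show ?thesis unfolding num_return_times_def using fin by simp
qed

theorem theorem1p7:
  fixes D :: "(real^'n) set" and \<alpha> :: "real^'n"
  assumes "CARD('n) \<ge> 2"
    and "bounded D" and "convex D" and "interior D \<noteq> {}"
    and "(SUP T\<in>{T :: real^'n. \<forall>i. T $ i \<ge> 1}. num_return_times \<alpha> (scale_inv D T)) = \<infinity>"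
  shows "liminf (\<lambda>n::nat. ereal (real n * (\<Prod>i\<in>UNIV. dist_Z (real n * \<alpha> $ i)))) = 0"
proof (rule ccontr)
  assume L: "liminf (\<lambda>n::nat. ereal (real n * (\<Prod>i\<in>UNIV. dist_Z (real n * \<alpha> $ i)))) \<noteq> 0"
  obtain c where c: "c > 0" and bad: "\<forall>m::nat. m \<ge> 1 \<longrightarrow> real m * (\<Prod>i\<in>UNIV. dist_Z (real m * \<alpha>$i)) \<ge> c"
    using bad_const[OF L] by blast
  define d where "d = CARD('n)"
  have d1: "CARD('n) \<ge> 1" by (simp add: Suc_leI)
  define a where "a = (10 * CARD('n) / min 1 c)^CARD('n) + 1"
  have dd: "min 1 c > 0" "min 1 c \<le> 1" using c by auto
  note ba = big_a[OF d1 dd a_def]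
  define E where "E = real (nat (2 * \<lceil>a/min 1 c\<rceil> + 1) * nat (2 * \<lceil>a/min 1 c\<rceil> + 1) ^ CARD('n)) * a"
  have E0: "E \<ge> 0" unfolding E_def using ba(2) by simp
  obtain x0 where "x0 \<in> interior D" using assms(4) by auto
  then obtain e where e: "e > 0" "ball x0 e \<subseteq> D" using mem_interior by blast
  define r' where "r' = e / (2 * CARD('n))"
  have r'0: "r' > 0" unfolding r'_def using e by simp
  have boxD: "\<forall>x. (\<forall>i. \<bar>x$i - x0$i\<bar> \<le> r') \<longrightarrow> x \<in> D"
  proof (intro allI impI)
    fix x :: "real^'n" assume xi: "\<forall>i. \<bar>x$i - x0$i\<bar> \<le> r'"
    have "norm (x0 - x) = norm (x - x0)" by (simp add: norm_minus_commute)
    also have "\<dots> \<le> (\<Sum>i\<in>UNIV. \<bar>(x - x0)$i\<bar>)" by (rule norm_le_l1_cart)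
    also have "\<dots> \<le> (\<Sum>i\<in>(UNIV::'n set). r')" using xi by (intro sum_mono) simp
    also have "\<dots> = e / 2" unfolding r'_def by simp
    also have "\<dots> < e" using e by simp
    finally have "x \<in> ball x0 e" by (simp add: dist_norm)
    with e show "x \<in> D" by blast
  qed
  obtain B where B: "\<forall>x\<in>D. norm x \<le> B" using assms(2) bounded_iff by blast
  have Bb: "\<forall>x\<in>D. \<forall>i. \<bar>x$i\<bar> \<le> B" using B component_le_norm_cart order_trans by blast
  define s where "s = max 1 (E / (a * r'))"
  have s1: "s \<ge> 1" unfolding s_def by simp
  have a0: "a > 0" using ba(2) by simp
  have Es: "E / (a * s) \<le> r'"
  proof -
    have "E / (a * r') \<le> s" unfolding s_def by simp
    then have "E \<le> s * (a * r')" using a0 r'0 by (simp add: divide_le_eq)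
    then show ?thesis using a0 s1 by (simp add: divide_le_eq mult.commute mult.left_commute)
  qed
  define C where "C = E * (a * s)^CARD('n)"
  have C0: "C \<ge> 0" unfolding C_def using E0 a0 s1 by simp
  define Bd where "Bd = nat (2 * \<lceil>(2*C+1)/min 1 c\<rceil> + 1) * nat (2 * \<lceil>(2*B)/min 1 c\<rceil> + 1) ^ CARD('n)"
  have bound: "num_return_times \<alpha> (scale_inv D T) \<le> enat Bd" if T1: "\<forall>i. T$i \<ge> 1" for T :: "real^'n"
  proof -
    have cov: "\<forall>y0 yv. \<exists>n z. \<bar>of_int n / (\<Prod>i\<in>UNIV. T$i) - y0\<bar> \<le> C
                 \<and> (\<forall>i. \<bar>(of_int n * \<alpha>$i - of_int (z$i)) * T$i - yv$i\<bar> \<le> r')"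
    proof (intro allI)
      fix y0 :: real and yv :: "real^'n"
      obtain n z where "\<bar>of_int n / (\<Prod>i\<in>UNIV. T$i) - y0\<bar> \<le> E * (a * s)^CARD('n)"
        "\<forall>i. \<bar>(of_int n * \<alpha>$i - of_int (z$i)) * T$i - yv$i\<bar> \<le> E / (a * s)"
        using covering2[OF c bad a_def E_def s1 T1, of y0 yv] by blast
      then show "\<exists>n z. \<bar>of_int n / (\<Prod>i\<in>UNIV. T$i) - y0\<bar> \<le> C
                 \<and> (\<forall>i. \<bar>(of_int n * \<alpha>$i - of_int (z$i)) * T$i - yv$i\<bar> \<le> r')"
        unfolding C_def using Es order_trans by blast
    qed
    have hyp: "\<forall>q\<in>scale_inv D T. \<exists>m. tau \<alpha> (scale_inv D T) q = enat m \<and> 1 \<le> m \<and> real m \<le> (2*C+1) * (\<Prod>i\<in>UNIV. T$i)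
         \<and> (\<exists>zz::int^'n. \<forall>i. \<bar>(real m * \<alpha>$i - of_int (zz$i)) * T$i\<bar> \<le> 2*B)"
      using claim1[OF T1 boxD Bb cov C0] by blast
    show ?thesis using count_values[OF T1 c bad hyp] unfolding Bd_def .
  qed
  have "(SUP T\<in>{T :: real^'n. \<forall>i. T $ i \<ge> 1}. num_return_times \<alpha> (scale_inv D T)) \<le> enat Bd"
    using bound by (intro SUP_least) auto
  with assms(5) show False by simp
qed

end
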